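(* Let $V$ be a finite dimensional real vector space and $f_1, f_2 \in C^2(V)$ be functions such that $d^2 f_1(x)$ and $d^2 f_2(x)$ are positive definite for all $x \in V$. Then $d(f_1 + f_2)(V) = df_1(V) + df_2(V)$ (Minkowski sum). *)

theory Defs
  imports "HOL-Analysis.Analysis"
begin

definition C2_with :: "('a::euclidean_space \<Rightarrow> real) \<Rightarrow> ('a \<Rightarrow> ('a \<Rightarrow>\<^sub>L real))
    \<Rightarrow> ('a \<Rightarrow> ('a \<Rightarrow>\<^sub>L ('a \<Rightarrow>\<^sub>L real))) \<Rightarrow> bool" where
  "C2_with f Df D2f \<longleftrightarrow>
     (\<forall>x. (f has_derivative blinfun_apply (Df x)) (at x)) \<and>
     (\<forall>x. (Df has_derivative blinfun_apply (D2f x)) (at x)) \<and>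
     continuous_on UNIV D2f"

definition pos_def_form :: "('a::real_normed_vector \<Rightarrow>\<^sub>L ('a \<Rightarrow>\<^sub>L real)) \<Rightarrow> bool" where
  "pos_def_form B \<longleftrightarrow> (\<forall>v. v \<noteq> 0 \<longrightarrow> blinfun_apply (blinfun_apply B v) v > 0)"

end

theory Submission
  imports Defs
begin
lemma oneD:
  fixes p p' p'' :: "real \<Rightarrow> real"
  assumes d1: "\<And>t. (p has_real_derivative p' t) (at t)"
    and d2: "\<And>t. (p' has_real_derivative p'' t) (at t)"
    and pos: "\<And>t. p'' t > 0" and z: "p' 0 = 0"
  shows "p' 1 > 0" "\<And>s. s \<ge> 0 \<Longrightarrow> p s \<ge> p 0"
    "\<And>s. s \<ge> 1 \<Longrightarrow> p s \<ge> p 0 + p' 1 * (s - 1)"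
proof -
  have inc: "p' a < p' b" if "a < b" for a b
    using DERIV_pos_imp_increasing[OF that] d2 pos by blast
  have mono: "p' a \<le> p' b" if "a \<le> b" for a b
    using inc[of a b] that by (cases "a = b") auto
  show "p' 1 > 0" using inc[of 0 1] z by simp
  have nd: "p 0 \<le> p s" if "s \<ge> 0" for s
    using DERIV_nonneg_imp_nondecreasing[OF that] d1 mono z by (metis)
  then show "\<And>s. s \<ge> 0 \<Longrightarrow> p s \<ge> p 0" by blast
  fix s :: real assume s: "s \<ge> 1"
  have "p 1 - p' 1 * 1 \<le> p s - p' 1 * s"
  proof (rule DERIV_nonneg_imp_nondecreasing[OF s, where f="\<lambda>t. p t - p' 1 * t"])
    fix x :: real assume "1 \<le> x" "x \<le> s"
    have "((\<lambda>t. p t - p' 1 * t) has_real_derivative p' x - p' 1 * 1) (at x)"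
      using d1[of x] by (auto intro!: derivative_eq_intros)
    then show "\<exists>y. ((\<lambda>t. p t - p' 1 * t) has_real_derivative y) (at x) \<and> 0 \<le> y"
      using mono[of 1 x] \<open>1 \<le> x\<close> by auto
  qed
  moreover have "p 0 \<le> p 1" using nd by simp
  ultimately show "p s \<ge> p 0 + p' 1 * (s - 1)" by (simp add: algebra_simps)
qed

lemma growth:
  fixes f :: "'a::euclidean_space \<Rightarrow> real"
  assumes C: "C2_with f Df D2f" and P: "\<forall>x. pos_def_form (D2f x)"
  shows "\<exists>c>0. \<forall>z. f z - Df x0 z \<ge> f x0 - Df x0 x0 + c * (norm (z - x0) - 1)"
proof -
  have dF: "\<And>x. (f has_derivative blinfun_apply (Df x)) (at x)"
    and dD: "\<And>x. (Df has_derivative blinfun_apply (D2f x)) (at x)"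
    using C unfolding C2_with_def by auto
  define q where "q v = Df (x0 + v) v - Df x0 v" for v
  have key: "q v > 0 \<and> (\<forall>s\<ge>0. f (x0 + s *\<^sub>R v) - Df x0 (x0 + s *\<^sub>R v) \<ge> f x0 - Df x0 x0)
     \<and> (\<forall>s\<ge>1. f (x0 + s *\<^sub>R v) - Df x0 (x0 + s *\<^sub>R v) \<ge> f x0 - Df x0 x0 + q v * (s - 1))"
    if v0: "v \<noteq> 0" for v
  proof -
    define p where "p t = f (x0 + t *\<^sub>R v) - Df x0 (x0 + t *\<^sub>R v)" for t
    define p' where "p' t = Df (x0 + t *\<^sub>R v) v - Df x0 v" for t
    define p'' where "p'' t = D2f (x0 + t *\<^sub>R v) v v" for t
    have lin: "((\<lambda>t::real. x0 + t *\<^sub>R v) has_derivative (\<lambda>h. h *\<^sub>R v)) (at t)" for t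
      by (auto intro!: derivative_eq_intros)
    have d1: "(p has_real_derivative p' t) (at t)" for t
    proof -
      have a: "((\<lambda>t. f (x0 + t *\<^sub>R v)) has_derivative (\<lambda>h. Df (x0 + t *\<^sub>R v) (h *\<^sub>R v))) (at t)"
        using has_derivative_compose[OF lin dF] by simp
      have b: "((\<lambda>t. Df x0 (x0 + t *\<^sub>R v)) has_derivative (\<lambda>h. Df x0 (h *\<^sub>R v))) (at t)"
        using has_derivative_compose[OF lin[of t] bounded_linear_imp_has_derivative[OF blinfun.bounded_linear_right[of "Df x0"]]] by simp
      have "(p has_derivative (\<lambda>h. Df (x0 + t *\<^sub>R v) (h *\<^sub>R v) - Df x0 (h *\<^sub>R v))) (at t)"
        unfolding p_def by (rule has_derivative_diff[OF a b])
      then show ?thesis unfolding has_field_derivative_def p'_def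
        by (rule has_derivative_eq_rhs) (auto simp: blinfun.scaleR_right algebra_simps)
    qed
    have d2: "(p' has_real_derivative p'' t) (at t)" for t
    proof -
      have a: "((\<lambda>t. Df (x0 + t *\<^sub>R v)) has_derivative (\<lambda>h. D2f (x0 + t *\<^sub>R v) (h *\<^sub>R v))) (at t)"
        using has_derivative_compose[OF lin dD] by simp
      have b: "((\<lambda>t. Df (x0 + t *\<^sub>R v) v) has_derivative (\<lambda>h. D2f (x0 + t *\<^sub>R v) (h *\<^sub>R v) v)) (at t)"
        using bounded_bilinear.FDERIV[OF bounded_bilinear_blinfun_apply a has_derivative_const[of v]]
        by simp
      have "(p' has_derivative (\<lambda>h. D2f (x0 + t *\<^sub>R v) (h *\<^sub>R v) v - 0)) (at t)"
        unfolding p'_def by (rule has_derivative_diff[OF b has_derivative_const])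
      then show ?thesis unfolding has_field_derivative_def p''_def
        by (rule has_derivative_eq_rhs) (auto simp: blinfun.scaleR_right blinfun.scaleR_left algebra_simps)
    qed
    have pos: "p'' t > 0" for t
      using P v0 unfolding pos_def_form_def p''_def by auto
    have z: "p' 0 = 0" by (simp add: p'_def)
    note r = oneD[OF d1 d2 pos z]
    have "p' 1 = q v" by (simp add: p'_def q_def)
    then show ?thesis using r unfolding p_def by auto
  qed
  have cont: "continuous_on (sphere 0 1) q"
  proof -
    have "continuous_on UNIV Df"
      using dD by (meson continuous_at_imp_continuous_on has_derivative_continuous)
    then have c1: "continuous_on UNIV (\<lambda>v. Df (x0 + v))"
      by (auto intro!: continuous_intros continuous_on_compose2[of UNIV Df])
    show ?thesis unfolding q_def
      by (auto intro!: continuous_intros continuous_on_subset[OF c1])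
  qed
  have ne: "sphere (0::'a) 1 \<noteq> {}" by simp
  obtain v0 where v0: "v0 \<in> sphere 0 1" and mn: "\<forall>y\<in>sphere 0 1. q v0 \<le> q y"
    using continuous_attains_inf[OF compact_sphere ne cont] by blast
  have "v0 \<noteq> 0" using v0 by auto
  then have cpos: "q v0 > 0" using key[of v0] by blast
  show ?thesis
  proof (intro exI[of _ "q v0"] conjI allI cpos)
    fix z
    show "f z - Df x0 z \<ge> f x0 - Df x0 x0 + q v0 * (norm (z - x0) - 1)"
    proof (cases "z = x0")
      case True then show ?thesis using cpos by simp
    next
      case False
      define s where "s = norm (z - x0)"
      define v where "v = (1 / s) *\<^sub>R (z - x0)"
      have s0: "s > 0" using False by (simp add: s_def)
      have vs: "v \<in> sphere 0 1" using s0 by (simp add: v_def s_def)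
      then have vn: "v \<noteq> 0" by auto
      have zeq: "z = x0 + s *\<^sub>R v" using s0 by (simp add: v_def)
      show ?thesis
      proof (cases "s \<ge> 1")
        case True
        have "q v0 * (s - 1) \<le> q v * (s - 1)" using mn vs True by (simp add: mult_right_mono)
        then show ?thesis using key[OF vn] True unfolding zeq s_def[symmetric]
          by (smt (verit) zeq s_def)
      next
        case False
        have "q v0 * (s - 1) \<le> 0" using cpos False by (simp add: mult_nonneg_nonpos)
        then show ?thesis using key[OF vn] s0 unfolding s_def[symmetric]
          by (smt (verit) zeq)
      qed
    qed
  qed
qed

theorem lemma1p19:
  fixes f1 f2 :: "'a::euclidean_space \<Rightarrow> real"
    and Df1 Df2 :: "'a \<Rightarrow> ('a \<Rightarrow>\<^sub>L real)"
    and D2f1 D2f2 :: "'a \<Rightarrow> ('a \<Rightarrow>\<^sub>L ('a \<Rightarrow>\<^sub>L real))"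
    and Dsum :: "'a \<Rightarrow> ('a \<Rightarrow>\<^sub>L real)"
  assumes "C2_with f1 Df1 D2f1" and "C2_with f2 Df2 D2f2"
    and "\<forall>x. pos_def_form (D2f1 x)" and "\<forall>x. pos_def_form (D2f2 x)"
    and "\<forall>x. ((\<lambda>y. f1 y + f2 y) has_derivative blinfun_apply (Dsum x)) (at x)"
  shows "range Dsum = {a + b | a b. a \<in> range Df1 \<and> b \<in> range Df2}"
proof -
  have d1: "\<And>x. (f1 has_derivative blinfun_apply (Df1 x)) (at x)"
    using assms(1) unfolding C2_with_def by auto
  have d2: "\<And>x. (f2 has_derivative blinfun_apply (Df2 x)) (at x)"
    using assms(2) unfolding C2_with_def by auto
  have dsum: "Dsum x = Df1 x + Df2 x" for x
  proof -
    have "blinfun_apply (Dsum x) = (\<lambda>h. Df1 x h + Df2 x h)"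
      using has_derivative_unique[OF assms(5)[rule_format, of x] has_derivative_add[OF d1 d2]] .
    then show ?thesis by (intro blinfun_eqI) (simp add: blinfun.add_left)
  qed
  show ?thesis
  proof
    show "range Dsum \<subseteq> {a + b | a b. a \<in> range Df1 \<and> b \<in> range Df2}"
      using dsum by blast
  next
    show "{a + b | a b. a \<in> range Df1 \<and> b \<in> range Df2} \<subseteq> range Dsum"
    proof safe
      fix x1 x2
      define a where "a = Df1 x1"
      define b where "b = Df2 x2"
      obtain c1 where c1: "c1 > 0" and g1: "\<And>z. f1 z - a z \<ge> f1 x1 - a x1 + c1 * (norm (z - x1) - 1)"
        using growth[OF assms(1), of x1] assms(3) unfolding a_def by blast
      obtain c2 where c2: "c2 > 0" and g2: "\<And>z. f2 z - b z \<ge> f2 x2 - b x2 + c2 * (norm (z - x2) - 1)"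
        using growth[OF assms(2), of x2] assms(4) unfolding b_def by blast
      define g where "g y = f1 y + f2 y - (a + b) y" for y
      define K where "K = f1 x1 - a x1 + f2 x2 - b x2 - c1 * (norm x1 + 1) - c2 * (norm x2 + 1)"
      have lower: "g z \<ge> K + (c1 + c2) * norm z" for z
      proof -
        have "norm (z - x1) \<ge> norm z - norm x1" "norm (z - x2) \<ge> norm z - norm x2"
          by (auto simp: norm_triangle_ineq2)
        then have "c1 * (norm (z - x1) - 1) \<ge> c1 * (norm z - norm x1 - 1)"
             "c2 * (norm (z - x2) - 1) \<ge> c2 * (norm z - norm x2 - 1)"
          using c1 c2 by (auto intro!: mult_left_mono)
        then show ?thesis using g1[of z] g2[of z] unfolding g_def K_def
          by (simp add: blinfun.add_left algebra_simps)
      qed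
      have gd: "(g has_derivative (\<lambda>h. Dsum z h - (a + b) h)) (at z)" for z
        unfolding g_def
        by (rule has_derivative_diff[OF assms(5)[rule_format]
              bounded_linear_imp_has_derivative[OF blinfun.bounded_linear_right]])
      have gc: "continuous_on UNIV g"
        using gd by (meson continuous_at_imp_continuous_on has_derivative_continuous)
      define R where "R = \<bar>g 0 - K\<bar> / (c1 + c2) + 1"
      have R0: "R > 0" unfolding R_def using c1 c2 by (smt (verit) divide_nonneg_pos abs_ge_zero)
      have far: "g y > g 0" if "norm y > R" for y
      proof -
        have "(c1 + c2) * norm y > (c1 + c2) * R" using that c1 c2 by simp
        also have "(c1 + c2) * R = \<bar>g 0 - K\<bar> + (c1 + c2)" unfolding R_def using c1 c2
          by (simp add: field_simps)
        finally show ?thesis using lower[of y] c1 c2 by linarith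
      qed
      have ne: "cball (0::'a) R \<noteq> {}" using R0 by simp
      obtain z where zin: "z \<in> cball 0 R" and zmin: "\<forall>y\<in>cball 0 R. g z \<le> g y"
        using continuous_attains_inf[OF compact_cball ne continuous_on_subset[OF gc]] by blast
      have glob: "g z \<le> g y" for y
      proof (cases "y \<in> cball 0 R")
        case True then show ?thesis using zmin by blast
      next
        case False
        then have "g y > g 0" using far by simp
        moreover have "g z \<le> g 0" using zmin R0 by simp
        ultimately show ?thesis by simp
      qed
      have "(\<lambda>h. Dsum z h - (a + b) h) = (\<lambda>h. 0)"
        using has_derivative_local_min[OF gd] glob by simp
      then have "Dsum z = a + b"
        by (intro blinfun_eqI) (metis eq_iff_diff_eq_0)
      then show "Df1 x1 + Df2 x2 \<in> range Dsum" unfolding a_def b_def by (metis rangeI)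
    qed
  qed
qed

end
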